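(* For every integer $m\geq 1$, \[ \mathcal{I}_m=\big\{(i,j,t,p)\in\mathbb{Z}^4 \;\big|\; 0\leq i,j\leq m,\ \max\{i+j-m,\ m-1-i-j\}\leq t\leq m-|i-j|,\ \max\{0,\ i+j-m,\ i+t-m,\ j+t-m\}\leq p\leq \min\{i,\ j,\ t,\ i+j+t+1-m\}\big\}. \] Moreover, $|\mathcal{I}_m|=\binom{m+4}{4}$.
   Context: Let $m$ be a positive integer, $S=\{1,2,\ldots,2m+1\}$, and let $X$ be the set of all $m$-element subsets of $S$. For an ordered triple $(x,y,z)\in X\times X\times X$ define $\partial(x,y,z):=(|x\cap y|,\ |x\cap z|,\ |y\cap z|,\ |x\cap y\cap z|)$. Let $\mathcal{I}_m$ denote the set of all four-tuples $(i,j,t,p)$ such that $\partial(x,y,z)=(i,j,t,p)$ for some $x,y,z\in X$. *)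

theory Defs
  imports Main
begin

definition Xset :: "nat \<Rightarrow> nat set set" where
  "Xset m = {x. x \<subseteq> {1..2*m+1} \<and> card x = m}"

definition profile :: "nat set \<Rightarrow> nat set \<Rightarrow> nat set \<Rightarrow> int \<times> int \<times> int \<times> int" where
  "profile x y z = (int (card (x \<inter> y)), int (card (x \<inter> z)), int (card (y \<inter> z)),
                    int (card (x \<inter> y \<inter> z)))"

definition Iset :: "nat \<Rightarrow> (int \<times> int \<times> int \<times> int) set" where
  "Iset m = {profile x y z | x y z. x \<in> Xset m \<and> y \<in> Xset m \<and> z \<in> Xset m}"

end

theory Submission
  imports Defs
begin


definition Rset :: "nat \<Rightarrow> (int \<times> int \<times> int \<times> int) set" where
 "Rset m = {(i, j, t, p) | i j t p :: int.
            0 \<le> i \<and> i \<le> int m \<and> 0 \<le> j \<and> j \<le> int m \<and>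
            max (i + j - int m) (int m - 1 - i - j) \<le> t \<and> t \<le> int m - \<bar>i - j\<bar> \<and>
            max (max 0 (i + j - int m)) (max (i + t - int m) (j + t - int m)) \<le> p \<and>
            p \<le> min (min i j) (min t (i + j + t + 1 - int m))}"

definition good :: "nat \<Rightarrow> int \<Rightarrow> int \<Rightarrow> int \<Rightarrow> int \<Rightarrow> bool" where
 "good m i j t p \<longleftrightarrow> 0 \<le> p \<and> p \<le> i \<and> p \<le> j \<and> p \<le> t \<and> i + j - int m \<le> p \<and>
    i + t - int m \<le> p \<and> j + t - int m \<le> p \<and> p \<le> i + j + t + 1 - int m"

lemma Rset_good: "Rset m = {(i,j,t,p). good m i j t p}"
proof -
  have "\<And>i j t p. (0 \<le> i \<and> i \<le> int m \<and> 0 \<le> j \<and> j \<le> int m \<and>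
            max (i + j - int m) (int m - 1 - i - j) \<le> t \<and> t \<le> int m - \<bar>i - j\<bar> \<and>
            max (max 0 (i + j - int m)) (max (i + t - int m) (j + t - int m)) \<le> p \<and>
            p \<le> min (min i j) (min t (i + j + t + 1 - int m))) = good m i j t p"
    unfolding good_def max.bounded_iff min.bounded_iff by (auto simp: abs_if)
  then show ?thesis unfolding Rset_def by auto
qed

lemma two_int: "finite x \<Longrightarrow> finite y \<Longrightarrow> int (card x) + int (card y) = int (card (x \<union> y)) + int (card (x \<inter> y))"
  using card_Un_Int[of x y] by simp

lemma sub1: "Iset m \<subseteq> Rset m"
proof
  fix q assume "q \<in> Iset m"
  then obtain x y z where q: "q = profile x y z" and xX: "x \<in> Xset m" and yX: "y \<in> Xset m" and zX: "z \<in> Xset m"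
    unfolding Iset_def by blast
  have fS: "finite {1..2*m+1}" by simp
  from xX yX zX have sx: "x \<subseteq> {1..2*m+1}" "card x = m" and sy: "y \<subseteq> {1..2*m+1}" "card y = m"
    and sz: "z \<subseteq> {1..2*m+1}" "card z = m" by (auto simp: Xset_def)
  have fx: "finite x" using sx finite_subset fS by blast
  have fy: "finite y" using sy finite_subset fS by blast
  have fz: "finite z" using sz finite_subset fS by blast
  define i where "i = int (card (x \<inter> y))"
  define j where "j = int (card (x \<inter> z))"
  define t where "t = int (card (y \<inter> z))"
  define p where "p = int (card (x \<inter> y \<inter> z))"
  have e1: "int (card (x \<inter> y)) + int (card (x \<inter> z)) = int (card ((x \<inter> y) \<union> (x \<inter> z))) + p"
    unfolding p_def using two_int[of "x \<inter> y" "x \<inter> z"] fx fy fz by (simp add: Int_ac)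
  have e2: "int (card (x \<inter> y)) + int (card (y \<inter> z)) = int (card ((x \<inter> y) \<union> (y \<inter> z))) + p"
    unfolding p_def using two_int[of "x \<inter> y" "y \<inter> z"] fx fy fz by (simp add: Int_ac)
  have e3: "int (card (x \<inter> z)) + int (card (y \<inter> z)) = int (card ((x \<inter> z) \<union> (y \<inter> z))) + p"
    unfolding p_def using two_int[of "x \<inter> z" "y \<inter> z"] fx fy fz by (simp add: Int_ac)
  have l1: "card ((x \<inter> y) \<union> (x \<inter> z)) \<le> card x" by (rule card_mono[OF fx]) auto
  have l2: "card ((x \<inter> y) \<union> (y \<inter> z)) \<le> card y" by (rule card_mono[OF fy]) auto
  have l3: "card ((x \<inter> z) \<union> (y \<inter> z)) \<le> card z" by (rule card_mono[OF fz]) auto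
  have u1: "int (card x) + int (card y) = int (card (x \<union> y)) + i"
    unfolding i_def using two_int[OF fx fy] .
  have u2: "int (card (x \<union> y)) + int (card z) = int (card (x \<union> y \<union> z)) + int (card ((x \<inter> z) \<union> (y \<inter> z)))"
    using two_int[of "x \<union> y" z] fx fy fz by (simp add: Int_Un_distrib2)
  have lu: "card (x \<union> y \<union> z) \<le> card {1..2*m+1}" by (rule card_mono[OF fS]) (use sx sy sz in auto)
  have p1: "p \<le> i" unfolding p_def i_def by (auto intro!: card_mono simp: fx)
  have p2: "p \<le> j" unfolding p_def j_def by (auto intro!: card_mono simp: fx)
  have p3: "p \<le> t" unfolding p_def t_def by (auto intro!: card_mono simp: fy)
  have p0: "0 \<le> p" unfolding p_def by simp
  have "q = (i, j, t, p)" unfolding q profile_def i_def j_def t_def p_def ..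
  moreover have "good m i j t p" unfolding good_def
    using e1 e2 e3 l1 l2 l3 u1 u2 lu p1 p2 p3 p0 sx sy sz unfolding i_def[symmetric] j_def[symmetric] t_def[symmetric]
    by simp
  ultimately show "q \<in> Rset m" by (simp add: Rset_good)
qed



lemma sub2: "Rset m \<subseteq> Iset m"
proof
  fix q assume "q \<in> Rset m"
  then obtain i j t p where q: "q = (i,j,t,p)" and g: "good m i j t p" by (auto simp: Rset_good)
  note g' = g[unfolded good_def]
  define n1 where "n1 = nat p"
  define n2 where "n2 = nat (i - p)"
  define n3 where "n3 = nat (j - p)"
  define n4 where "n4 = nat (t - p)"
  define n5 where "n5 = nat (int m - i - j + p)"
  define n6 where "n6 = nat (int m - i - t + p)"
  define n7 where "n7 = nat (int m - j - t + p)"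
  define n8 where "n8 = nat (i + j + t + 1 - int m - p)"
  define c0 where "c0 = (1::nat)"
  define c1 where "c1 = c0 + n6"
  define c2 where "c2 = c1 + n4"
  define c3 where "c3 = c2 + n1"
  define c4 where "c4 = c3 + n2"
  define c5 where "c5 = c4 + n5"
  define c6 where "c6 = c5 + n3"
  define c7 where "c7 = c6 + n7"
  have c8: "c7 + n8 = 2*m+2" using g' unfolding c7_def c6_def c5_def c4_def c3_def c2_def c1_def c0_def
    n1_def n2_def n3_def n4_def n5_def n6_def n7_def n8_def by linarith
  define x where "x = {c2..<c6}"
  define y where "y = {c0..<c4}"
  define z where "z = {c1..<c3} \<union> {c5..<c7}"
  have ord: "c0 \<le> c1" "c1 \<le> c2" "c2 \<le> c3" "c3 \<le> c4" "c4 \<le> c5" "c5 \<le> c6" "c6 \<le> c7"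
    by (simp_all add: c1_def c2_def c3_def c4_def c5_def c6_def c7_def)
  have S: "{1..2*m+1} = {c0..<c7+n8}" using c8 c0_def by auto
  have xy: "x \<inter> y = {c2..<c4}" using ord unfolding x_def y_def by auto
  have xz: "x \<inter> z = {c2..<c3} \<union> {c5..<c6}" using ord unfolding x_def z_def by auto
  have yz: "y \<inter> z = {c1..<c3}" using ord unfolding y_def z_def by auto
  have xyz: "x \<inter> y \<inter> z = {c2..<c3}" using ord unfolding x_def y_def z_def by auto
  have cz: "card z = (c3 - c1) + (c7 - c5)" unfolding z_def
    by (subst card_Un_disjoint) (use ord in auto)
  have cxz: "card (x \<inter> z) = (c3 - c2) + (c6 - c5)" unfolding xz
    by (subst card_Un_disjoint) (use ord in auto)
  have i1: "int n1 = p" "int n2 = i - p" "int n3 = j - p" "int n4 = t - p" "int n7 = int m - j - t + p"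
    "int n5 = int m - i - j + p" "int n6 = int m - i - t + p"
    using g' unfolding n1_def n2_def n3_def n4_def n5_def n6_def n7_def by auto
  have "card z = n4 + n1 + n3 + n7" using cz unfolding c7_def c6_def c5_def c4_def c3_def c2_def c1_def by simp
  then have "int (card z) = int m" using i1 by simp
  then have czm: "card z = m" by simp
  have "z \<subseteq> {1..2*m+1}" using S ord unfolding z_def by auto
  then have zX: "z \<in> Xset m" unfolding Xset_def using czm by simp
  have "card x = n1 + n2 + n5 + n3" unfolding x_def c6_def c5_def c4_def c3_def by simp
  then have "int (card x) = int m" using i1 by simp
  then have cxm: "card x = m" by simp
  have "x \<subseteq> {1..2*m+1}" using S ord unfolding x_def by auto
  then have xX: "x \<in> Xset m" unfolding Xset_def using cxm by simp
  have "card y = n6 + n4 + n1 + n2" unfolding y_def c4_def c3_def c2_def c1_def by simp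
  then have "int (card y) = int m" using i1 by simp
  then have cym: "card y = m" by simp
  have "y \<subseteq> {1..2*m+1}" using S ord unfolding y_def by auto
  then have yX: "y \<in> Xset m" unfolding Xset_def using cym by simp
  have prof: "profile x y z = (i,j,t,p)" unfolding profile_def xyz unfolding xy cxz yz using i1
    unfolding c6_def c5_def c4_def c3_def c2_def by simp
  show "q \<in> Iset m" unfolding Iset_def q mem_Collect_eq
    apply (rule exI[of _ x], rule exI[of _ y], rule exI[of _ z])
    using xX yX zX prof by simp
qed



definition Q1 :: "nat \<Rightarrow> nat set" where "Q1 n = {..n}"
definition Q2 :: "nat \<Rightarrow> (nat \<times> nat) set" where "Q2 n = Sigma {..n} (\<lambda>a. Q1 (n-a))"
definition Q3 :: "nat \<Rightarrow> (nat \<times> nat \<times> nat) set" where "Q3 n = Sigma {..n} (\<lambda>a. Q2 (n-a))"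
definition Q4 :: "nat \<Rightarrow> (nat \<times> nat \<times> nat \<times> nat) set" where "Q4 n = Sigma {..n} (\<lambda>a. Q3 (n-a))"

lemma sum_rev: "(\<Sum>a\<le>n. f (n - a)) = (\<Sum>k\<le>n. (f k :: nat))" for n :: nat
  unfolding atMost_atLeast0 using sum.atLeastAtMost_rev[of "\<lambda>a. f (n - a)" 0 n] by simp

lemma fin1: "finite (Q1 n)" by (simp add: Q1_def)
lemma fin2: "finite (Q2 n)" by (simp add: Q2_def fin1)
lemma fin3: "finite (Q3 n)" by (simp add: Q3_def fin2)

lemma cQ1: "card (Q1 n) = (1 + n) choose n" by (simp add: Q1_def)
lemma cQ2: "card (Q2 n) = (2 + n) choose n"
proof -
  have "card (Q2 n) = (\<Sum>a\<le>n. card (Q1 (n-a)))" unfolding Q2_def by (simp add: card_SigmaI fin1)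
  also have "\<dots> = (\<Sum>k\<le>n. (1+k) choose k)" using sum_rev[of "\<lambda>k. card (Q1 k)" n] by (simp add: cQ1)
  also have "\<dots> = Suc (1 + n) choose n" by (rule sum_choose_lower)
  also have "\<dots> = (2 + n) choose n" by (simp add: numeral_eq_Suc)
  finally show ?thesis .
qed
lemma cQ3: "card (Q3 n) = (3 + n) choose n"
proof -
  have "card (Q3 n) = (\<Sum>a\<le>n. card (Q2 (n-a)))" unfolding Q3_def by (simp add: card_SigmaI fin2)
  also have "\<dots> = (\<Sum>k\<le>n. (2+k) choose k)" using sum_rev[of "\<lambda>k. card (Q2 k)" n] by (simp add: cQ2)
  also have "\<dots> = Suc (2 + n) choose n" by (rule sum_choose_lower)
  also have "\<dots> = (3 + n) choose n" by (simp add: numeral_eq_Suc)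
  finally show ?thesis .
qed
lemma cQ4: "card (Q4 n) = (n + 4) choose 4"
proof -
  have "card (Q4 n) = (\<Sum>a\<le>n. card (Q3 (n-a)))" unfolding Q4_def by (simp add: card_SigmaI fin3)
  also have "\<dots> = (\<Sum>k\<le>n. (3+k) choose k)" using sum_rev[of "\<lambda>k. card (Q3 k)" n] by (simp add: cQ3)
  also have "\<dots> = Suc (3 + n) choose n" by (rule sum_choose_lower)
  also have "\<dots> = (4 + n) choose n" by (simp add: numeral_eq_Suc)
  also have "\<dots> = (n + 4) choose 4" using binomial_symmetric[of n "n+4"] by (simp add: add.commute)
  finally show ?thesis .
qed

lemma Q4_iff: "(a,b,c,d) \<in> Q4 n \<longleftrightarrow> a + b + c + d \<le> n"
  by (auto simp: Q4_def Q3_def Q2_def Q1_def)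

definition Qi :: "nat \<Rightarrow> (int \<times> int \<times> int \<times> int) set" where
  "Qi m = {(a,b,c,d). 0 \<le> a \<and> 0 \<le> b \<and> 0 \<le> c \<and> 0 \<le> d \<and> a + b + c + d \<le> int m}"

lemma cQi: "card (Qi m) = (m + 4) choose 4"
proof -
  have "bij_betw (\<lambda>(a,b,c,d). (int a, int b, int c, int d)) (Q4 m) (Qi m)"
  proof (rule bij_betw_byWitness[where f'="\<lambda>(a,b,c,d). (nat a, nat b, nat c, nat d)"])
    show "\<forall>x\<in>Q4 m. (\<lambda>(a,b,c,d). (nat a, nat b, nat c, nat d)) ((\<lambda>(a,b,c,d). (int a, int b, int c, int d)) x) = x" by auto
    show "\<forall>x\<in>Qi m. (\<lambda>(a,b,c,d). (int a, int b, int c, int d)) ((\<lambda>(a,b,c,d). (nat a, nat b, nat c, nat d)) x) = x" by (auto simp: Qi_def)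
    show "(\<lambda>(a,b,c,d). (int a, int b, int c, int d)) ` Q4 m \<subseteq> Qi m"
      by (auto simp: Qi_def Q4_iff simp flip: of_nat_add)
    show "(\<lambda>(a,b,c,d). (nat a, nat b, nat c, nat d)) ` Qi m \<subseteq> Q4 m"
      by (auto simp: Qi_def Q4_iff)
  qed
  then show ?thesis using cQ4 bij_betw_same_card by metis
qed



definition hI :: "nat \<Rightarrow> int \<times> int \<times> int \<times> int \<Rightarrow> int \<times> int \<times> int \<times> int" where
  "hI m y = (case y of (y1,y2,y3,y4) \<Rightarrow>
     (if y1+y2+y3+y4 = int m then (y1+y2, y1+y3, y1+y4, y1)
      else if even (int m - 1 - (y1+y2+y3+y4))
      then (let k = (int m - 1 - (y1+y2+y3+y4)) div 2 in (y1+k+y2, y1+k+y3, y1+k+y4, y1+k))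
      else (let k = (int m - 1 - (y1+y2+y3+y4)) div 2 in (y1+y2+k+1, y1+y3+k+1, y1+y4+k+1, y1))))"

definition gI :: "nat \<Rightarrow> int \<times> int \<times> int \<times> int \<Rightarrow> int \<times> int \<times> int \<times> int" where
  "gI m q = (case q of (i,j,t,p) \<Rightarrow>
     (if i+j+t-2*p = int m then (p, i-p, j-p, t-p)
      else if i+j+t-2*p < int m then (let k = int m - 1 - (i+j+t-2*p) in (p-k, i-p, j-p, t-p))
      else (let k = i+j+t-2*p - int m - 1 in (p, i-p-k-1, j-p-k-1, t-p-k-1))))"

lemma hm1: "y1+y2+y3+y4 = int m \<Longrightarrow> hI m (y1,y2,y3,y4) = (y1+y2, y1+y3, y1+y4, y1)"
  by (simp add: hI_def)
lemma hm2: assumes e: "int m - 1 - (y1+y2+y3+y4) = 2*k" and "k \<ge> 0" shows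
   "hI m (y1,y2,y3,y4) = (y1+k+y2, y1+k+y3, y1+k+y4, y1+k)"
proof -
  have n: "y1+y2+y3+y4 \<noteq> int m" using assms by linarith
  have o: "even (int m - 1 - (y1+y2+y3+y4))" unfolding e by simp
  have d: "(int m - 1 - (y1+y2+y3+y4)) div 2 = k" unfolding e by simp
  show ?thesis unfolding hI_def prod.case Let_def if_not_P[OF n] if_P[OF o] d ..
qed
lemma hm3: assumes e: "int m - 1 - (y1+y2+y3+y4) = 2*k+1" and "k \<ge> 0" shows
   "hI m (y1,y2,y3,y4) = (y1+y2+k+1, y1+y3+k+1, y1+y4+k+1, y1)"
proof -
  have n: "y1+y2+y3+y4 \<noteq> int m" using assms by linarith
  have o: "\<not> even (int m - 1 - (y1+y2+y3+y4))" unfolding e by simp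
  have d: "(int m - 1 - (y1+y2+y3+y4)) div 2 = k" unfolding e by simp
  show ?thesis unfolding hI_def prod.case Let_def if_not_P[OF n] if_not_P[OF o] d ..
qed
lemma gm1: "i+j+t-2*p = int m \<Longrightarrow> gI m (i,j,t,p) = (p, i-p, j-p, t-p)"
  by (simp add: gI_def)
lemma gm2: "int m - 1 - (i+j+t-2*p) = k \<Longrightarrow> k \<ge> 0 \<Longrightarrow> gI m (i,j,t,p) = (p-k, i-p, j-p, t-p)"
  by (simp add: gI_def Let_def)
lemma gm3: "i+j+t-2*p - int m - 1 = k \<Longrightarrow> k \<ge> 0 \<Longrightarrow> gI m (i,j,t,p) = (p, i-p-k-1, j-p-k-1, t-p-k-1)"
  by (simp add: gI_def Let_def)

lemma hcases:
  fixes s M :: int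
  assumes "s \<le> M"
  obtains "s = M" | k where "M - 1 - s = 2*k" "k \<ge> 0" | k where "M - 1 - s = 2*k+1" "k \<ge> 0"
proof -
  consider "s = M" | "s < M" using assms by linarith
  then show ?thesis
  proof cases
    case 1 then show ?thesis using that by blast
  next
    case 2
    have "\<exists>k. M - 1 - s = 2*k \<or> M - 1 - s = 2*k+1" by presburger
    then obtain k where "M - 1 - s = 2*k \<or> M - 1 - s = 2*k+1" by blast
    moreover have "k \<ge> 0" using calculation 2 by linarith
    ultimately show ?thesis using that by blast
  qed
qed

lemma gcases:
  fixes s M :: int
  obtains "s = M" | k where "M - 1 - s = k" "k \<ge> 0" | k where "s - M - 1 = k" "k \<ge> 0"
proof -
  consider "s = M" | "s < M" | "s > M" by linarith
  then show ?thesis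
  proof cases
    case 1 then show ?thesis using that by blast
  next
    case 2 then show ?thesis using that(2)[of "M - 1 - s"] by linarith
  next
    case 3 then show ?thesis using that(3)[of "s - M - 1"] by linarith
  qed
qed

lemma bijQR: "bij_betw (hI m) (Qi m) (Rset m)"
proof (rule bij_betw_byWitness[where f'="gI m"])
  show "\<forall>y\<in>Qi m. gI m (hI m y) = y"
  proof
    fix y assume "y \<in> Qi m"
    then obtain y1 y2 y3 y4 where y: "y = (y1,y2,y3,y4)" and c: "0 \<le> y1" "0 \<le> y2" "0 \<le> y3" "0 \<le> y4" "y1+y2+y3+y4 \<le> int m"
      by (auto simp: Qi_def)
    from c(5) show "gI m (hI m y) = y"
    proof (cases rule: hcases)
      case 1
      have pre: "(y1+y2)+(y1+y3)+(y1+y4)-2*y1 = int m" using 1 by linarith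
      show ?thesis unfolding y hm1[OF 1] gm1[OF pre] by (simp add: Rset_good)
    next
      case (2 k)
      have pre: "int m - 1 - ((y1+k+y2)+(y1+k+y3)+(y1+k+y4)-2*(y1+k)) = k" using 2 by (simp add: algebra_simps)
      show ?thesis unfolding y hm2[OF 2] gm2[OF pre 2(2)] by (simp add: Rset_good)
    next
      case (3 k)
      have pre: "(y1+y2+k+1)+(y1+y3+k+1)+(y1+y4+k+1)-2*y1 - int m - 1 = k" using 3 by linarith
      show ?thesis unfolding y hm3[OF 3] gm3[OF pre 3(2)] by (simp add: Rset_good)
    qed
  qed
  show "\<forall>q\<in>Rset m. hI m (gI m q) = q"
  proof
    fix q assume "q \<in> Rset m"
    then obtain i j t p where q: "q = (i,j,t,p)" and g: "good m i j t p" by (auto simp: Rset_good)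
    note g' = g[unfolded good_def]
    show "hI m (gI m q) = q"
    proof (cases rule: gcases[of "i+j+t-2*p" "int m"])
      case 1
      have pre: "p+(i-p)+(j-p)+(t-p) = int m" using 1 by linarith
      show ?thesis unfolding q gm1[OF 1] hm1[OF pre] by (simp add: Rset_good)
    next
      case (2 k)
      have pre: "int m - 1 - ((p-k)+(i-p)+(j-p)+(t-p)) = 2*k" using 2 by linarith
      show ?thesis unfolding q gm2[OF 2] hm2[OF pre 2(2)] by (simp add: Rset_good)
    next
      case (3 k)
      have pre: "int m - 1 - (p+(i-p-k-1)+(j-p-k-1)+(t-p-k-1)) = 2*k+1" using 3 by linarith
      show ?thesis unfolding q gm3[OF 3] hm3[OF pre 3(2)] by (simp add: Rset_good)
    qed
  qed
  show "hI m ` Qi m \<subseteq> Rset m"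
  proof
    fix q assume "q \<in> hI m ` Qi m"
    then obtain y1 y2 y3 y4 where q: "q = hI m (y1,y2,y3,y4)" and c: "0 \<le> y1" "0 \<le> y2" "0 \<le> y3" "0 \<le> y4" "y1+y2+y3+y4 \<le> int m"
      by (auto simp: Qi_def)
    from c(5) show "q \<in> Rset m"
    proof (cases rule: hcases)
      case 1
      have "good m (y1+y2) (y1+y3) (y1+y4) y1" unfolding good_def using c 1 by linarith
      then show ?thesis unfolding q hm1[OF 1] by (simp add: Rset_good)
    next
      case (2 k)
      have "good m (y1+k+y2) (y1+k+y3) (y1+k+y4) (y1+k)" unfolding good_def using c 2 by linarith
      then show ?thesis unfolding q hm2[OF 2] by (simp add: Rset_good)
    next
      case (3 k)
      have "good m (y1+y2+k+1) (y1+y3+k+1) (y1+y4+k+1) y1" unfolding good_def using c 3 by linarith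
      then show ?thesis unfolding q hm3[OF 3] by (simp add: Rset_good)
    qed
  qed
  show "gI m ` Rset m \<subseteq> Qi m"
  proof
    fix y assume "y \<in> gI m ` Rset m"
    then obtain i j t p where y: "y = gI m (i,j,t,p)" and g: "good m i j t p" by (auto simp: Rset_good)
    note g' = g[unfolded good_def]
    show "y \<in> Qi m"
    proof (cases rule: gcases[of "i+j+t-2*p" "int m"])
      case 1
      have "0 \<le> p \<and> 0 \<le> i-p \<and> 0 \<le> j-p \<and> 0 \<le> t-p \<and> p+(i-p)+(j-p)+(t-p) \<le> int m" using g' 1 by linarith
      then show ?thesis unfolding y gm1[OF 1] Qi_def by simp
    next
      case (2 k)
      have "0 \<le> p-k \<and> 0 \<le> i-p \<and> 0 \<le> j-p \<and> 0 \<le> t-p \<and> (p-k)+(i-p)+(j-p)+(t-p) \<le> int m" using g' 2 by linarith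
      then show ?thesis unfolding y gm2[OF 2] Qi_def by simp
    next
      case (3 k)
      have "0 \<le> p \<and> 0 \<le> i-p-k-1 \<and> 0 \<le> j-p-k-1 \<and> 0 \<le> t-p-k-1 \<and> p+(i-p-k-1)+(j-p-k-1)+(t-p-k-1) \<le> int m" using g' 3 by linarith
      then show ?thesis unfolding y gm3[OF 3] Qi_def by simp
    qed
  qed
qed


theorem proposition3p1:
  fixes m :: nat
  assumes "m \<ge> 1"
  shows "Iset m = {(i, j, t, p) | i j t p :: int.
            0 \<le> i \<and> i \<le> int m \<and> 0 \<le> j \<and> j \<le> int m \<and>
            max (i + j - int m) (int m - 1 - i - j) \<le> t \<and> t \<le> int m - \<bar>i - j\<bar> \<and>
            max (max 0 (i + j - int m)) (max (i + t - int m) (j + t - int m)) \<le> p \<and>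
            p \<le> min (min i j) (min t (i + j + t + 1 - int m))}
         \<and> card (Iset m) = (m + 4) choose 4"
proof -
  have eq: "Iset m = Rset m" using sub1 sub2 by blast
  have "card (Rset m) = (m + 4) choose 4"
    using bij_betw_same_card[OF bijQR[of m]] cQi[of m] by simp
  then show ?thesis using eq unfolding Rset_def by simp
qed

end
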